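(* In the iPALM setting described in the context, suppose $\beta_k=\beta_0\sigma^k$ and $\rho_k=\rho_0\sigma^{-k}$ for all $k\ge0$, with $\beta_0>0$, $\rho_0>0$, $\sigma>1$. Then for every $k\ge0$, $$\sqrt{\beta_0\rho_0\|x^{(k+1)}-x^*\|^2+\|\lambda^{(k+1)}-\lambda^*\|^2}\le\sum_{i=0}^k\frac{2\beta_i\bar\varepsilon_i}{\sqrt{\beta_0\rho_0}}+\sqrt{\beta_0\rho_0\|x^{(0)}-x^*\|^2+\|\lambda^{(0)}-\lambda^*\|^2}.$$
   Context: iPALM setting. Consider $\min_x G(x):=f(x)+r(x)$ subject to $A_Ex=b_E$, $A_Ix\le b_I$, where $f:\mathbb R^n\to\mathbb R$ is convex, differentiable with $L_f$-Lipschitz gradient and $\mu$-strongly convex ($\mu\ge0$), and $r$ is proper closed convex. Write $A=[A_E;A_I]$, $b=[b_E;b_I]$, and multipliers $\lambda=[\lambda_E;\lambda_I]$. Assume $(x^*,\lambda^* )$ satisfies the KKT conditions $0\in\partial G(x^* )+A^\top\lambda^*$, $A_Ex^*=b_E$, $A_Ix^*\le b_I$, $\lambda_I^*\ge0$, $\langle\lambda_I^*,A_Ix^*-b_I\rangle=0$. The augmented Lagrangian is $\mathcal L_\beta(x,\lambda)=G(x)+\langle\lambda_E,A_Ex-b_E\rangle+\frac\beta2\|A_Ex-b_E\|^2+\frac1{2\beta}\big(\|[\beta(A_Ix-b_I)+\lambda_I]_+\|^2-\|\lambda_I\|^2\big)$, with $[\cdot]_+$ the componentwise positive part. Given $x^{(0)}\in\mathrm{dom}(G)$,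 $\lambda^{(0)}$, and positive numbers $\beta_k,\rho_k$ and $\bar\varepsilon_k\ge0$, the iPALM iterates satisfy for each $k\ge0$: with $\Psi_k(x)=\mathcal L_{\beta_k}(x,\lambda^{(k)})+\frac{\rho_k}2\|x-x^{(k)}\|^2$, the point $x^{(k+1)}$ is any point with $\mathrm{dist}(0,\partial\Psi_k(x^{(k+1)}))\le\bar\varepsilon_k$, and $\lambda_E^{(k+1)}=\lambda_E^{(k)}+\beta_k(A_Ex^{(k+1)}-b_E)$, $\lambda_I^{(k+1)}=[\lambda_I^{(k)}+\beta_k(A_Ix^{(k+1)}-b_I)]_+$. $\partial$ is the convex subdifferential and $\mathrm{dist}(0,S)=\inf_{s\in S}\|s\|$. *)

theory Defs
  imports "HOL-Analysis.Analysis" "HOL-Library.Extended_Real"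
begin

definition ext_convex :: "('a::real_vector \<Rightarrow> ereal) \<Rightarrow> bool" where
  "ext_convex r \<longleftrightarrow> (\<forall>x y t. 0 \<le> t \<and> t \<le> 1 \<longrightarrow>
      r ((1 - t) *\<^sub>R x + t *\<^sub>R y) \<le> ereal (1 - t) * r x + ereal t * r y)"

definition proper_fun :: "('a \<Rightarrow> ereal) \<Rightarrow> bool" where
  "proper_fun r \<longleftrightarrow> (\<forall>x. r x \<noteq> -\<infinity>) \<and> (\<exists>x. r x \<noteq> \<infinity>)"

definition closed_fun :: "('a::topological_space \<Rightarrow> ereal) \<Rightarrow> bool" where
  "closed_fun r \<longleftrightarrow> closed {(x, a::real). r x \<le> ereal a}"

definition strongly_convex_on_univ :: "real \<Rightarrow> ('a::real_normed_vector \<Rightarrow> real) \<Rightarrow> bool" where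
  "strongly_convex_on_univ \<mu> f \<longleftrightarrow> (\<forall>x y t. 0 \<le> t \<and> t \<le> 1 \<longrightarrow>
      f ((1 - t) *\<^sub>R x + t *\<^sub>R y) \<le> (1 - t) * f x + t * f y - \<mu> / 2 * t * (1 - t) * (norm (x - y))\<^sup>2)"

text \<open>Convex subdifferential of an extended-real valued function (empty outside the domain).\<close>
definition subdiff :: "('a::real_inner \<Rightarrow> ereal) \<Rightarrow> 'a \<Rightarrow> 'a set" where
  "subdiff \<phi> x = {g. \<bar>\<phi> x\<bar> \<noteq> \<infinity> \<and> (\<forall>y. \<phi> y \<ge> \<phi> x + ereal (g \<bullet> (y - x)))}"

text \<open>dist(0,S) = inf of norms, with inf of the empty set = +infinity.\<close>
definition dist0 :: "'a::real_normed_vector set \<Rightarrow> ereal" where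
  "dist0 S = (INF s\<in>S. ereal (norm s))"

definition pos_part :: "real^'m \<Rightarrow> real^'m" where
  "pos_part v = (\<chi> i. max (v $ i) 0)"

definition Gfun :: "('a \<Rightarrow> real) \<Rightarrow> ('a \<Rightarrow> ereal) \<Rightarrow> 'a \<Rightarrow> ereal" where
  "Gfun f r x = ereal (f x) + r x"

definition aug_lag ::
  "(real^'n \<Rightarrow> real) \<Rightarrow> (real^'n \<Rightarrow> ereal) \<Rightarrow> real^'n^'e \<Rightarrow> real^'e \<Rightarrow> real^'n^'i \<Rightarrow> real^'i
    \<Rightarrow> real \<Rightarrow> real^'n \<Rightarrow> real^'e \<Rightarrow> real^'i \<Rightarrow> ereal" where
  "aug_lag f r Ae be Ai bi \<beta> x lme lmi =
     Gfun f r x + ereal (lme \<bullet> (Ae *v x - be) + \<beta> / 2 * (norm (Ae *v x - be))\<^sup>2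
       + 1 / (2 * \<beta>) * ((norm (pos_part (\<beta> *\<^sub>R (Ai *v x - bi) + lmi)))\<^sup>2 - (norm lmi)\<^sup>2))"

end

theory Submission
  imports Defs
begin

lemma norm_sq_comb:
  fixes a b :: "'a::real_inner"
  shows "(norm ((1-t) *\<^sub>R a + t *\<^sub>R b))\<^sup>2 = (1-t)*(norm a)\<^sup>2 + t*(norm b)\<^sup>2 - t*(1-t)*(norm (a-b))\<^sup>2"
  by (simp add: power2_norm_eq_inner inner_add_left inner_add_right inner_diff_left inner_diff_right
      inner_commute algebra_simps)

lemma max_sq_conv:
  fixes a b t :: real
  assumes "0 \<le> t" "t \<le> 1"
  shows "(max ((1-t)*a+t*b) 0)\<^sup>2 \<le> (1-t)*(max a 0)\<^sup>2 + t*(max b 0)\<^sup>2"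
proof -
  define A where "A = max a 0"
  define B where "B = max b 0"
  have A: "0 \<le> A" "a \<le> A" and B: "0 \<le> B" "b \<le> B" by (auto simp: A_def B_def)
  have m1: "0 \<le> max ((1-t)*a+t*b) 0" by simp
  have "(1-t)*a \<le> (1-t)*A" using A assms by (simp add: mult_left_mono)
  moreover have "t*b \<le> t*B" using B assms by (simp add: mult_left_mono)
  ultimately have m2: "max ((1-t)*a+t*b) 0 \<le> (1-t)*A + t*B"
    using A B assms by (simp add: add_nonneg_nonneg)
  have "(max ((1-t)*a+t*b) 0)\<^sup>2 \<le> ((1-t)*A + t*B)\<^sup>2"
    using m1 m2 by (simp add: power_mono)
  also have "\<dots> = (1-t)*A\<^sup>2 + t*B\<^sup>2 - t*(1-t)*(A-B)\<^sup>2"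
    by (simp add: power2_eq_square algebra_simps)
  also have "\<dots> \<le> (1-t)*A\<^sup>2 + t*B\<^sup>2" using assms by simp
  finally show ?thesis by (simp add: A_def B_def)
qed

lemma norm_sq_sum: "(norm (v::real^'m))\<^sup>2 = (\<Sum>i\<in>UNIV. (v$i)\<^sup>2)"
  unfolding power2_norm_eq_inner inner_vec_def by (simp add: power2_eq_square)

lemma pos_part_conv:
  fixes u w :: "real^'m"
  assumes "0 \<le> t" "t \<le> 1"
  shows "(norm (pos_part ((1-t) *\<^sub>R u + t *\<^sub>R w)))\<^sup>2 \<le> (1-t)*(norm (pos_part u))\<^sup>2 + t*(norm (pos_part w))\<^sup>2"
  unfolding norm_sq_sum pos_part_def
  by (simp add: sum_distrib_left sum.distrib[symmetric] sum_mono max_sq_conv assms)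

lemma pos_part_le:
  fixes s l :: "real^'m"
  assumes "\<And>i. s $ i \<le> 0" "\<beta> > 0"
  shows "(norm (pos_part (\<beta> *\<^sub>R s + l)))\<^sup>2 \<le> (norm l)\<^sup>2"
  unfolding norm_sq_sum pos_part_def
proof (rule sum_mono)
  fix i
  have "\<beta> * s$i \<le> 0" using assms by (simp add: mult_nonneg_nonpos)
  then show "((\<chi> i. max ((\<beta> *\<^sub>R s + l) $ i) 0) $ i)\<^sup>2 \<le> (l $ i)\<^sup>2"
    by (cases "\<beta> * s$i + l$i \<le> 0") (auto simp: max_def intro!: power_mono abs_le_square_iff[THEN iffD2] )
qed

lemma pos_part_ge: "v $ i \<le> pos_part v $ i" by (simp add: pos_part_def)

lemma limit_trick:
  fixes c n K :: real
  assumes "c \<ge> 0" "n \<ge> 0" "\<And>t. 0 < t \<Longrightarrow> t < 1 \<Longrightarrow> c*(1-t)*n \<le> K"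
  shows "c*n \<le> K"
proof (rule ccontr)
  assume h: "\<not> c*n \<le> K"
  have "c*(1-1/2)*n \<le> K" using assms(3)[of "1/2"] by simp
  hence "K \<ge> c*n/2" by simp
  hence cn: "c*n > 0" using h by linarith
  define t where "t = (c*n-K)/(2*(c*n))"
  have t0: "0 < t" using h cn by (simp add: t_def)
  have "t \<le> 1/2" using cn \<open>K \<ge> c*n/2\<close> by (simp add: t_def field_simps)
  hence "c*(1-t)*n \<le> K" using assms(3) t0 by simp
  moreover have "c*n*t = (c*n-K)/2"
  proof -
    have "\<And>m::real. m > 0 \<Longrightarrow> m * ((m-K)/(2*m)) = (m-K)/2" by simp
    from this[OF cn] show ?thesis by (simp add: t_def)
  qed
  moreover have "c*(1-t)*n = c*n - c*n*t" by (simp add: algebra_simps)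
  ultimately show False using h by (simp add: field_simps)
qed

lemma dist_trick:
  fixes a b c :: real
  assumes "c \<ge> 0" "\<And>d. d > 0 \<Longrightarrow> a \<le> b + d*c"
  shows "a \<le> b"
proof (rule ccontr)
  assume "\<not> a \<le> b"
  hence "a - b > 0" by simp
  define d where "d = (a-b)/(c+1)"
  have "d > 0" using \<open>a-b>0\<close> assms by (simp add: d_def)
  hence "a \<le> b + d*c" using assms by simp
  moreover have "d*c < a - b" using \<open>a-b>0\<close> assms by (simp add: d_def field_simps)
  ultimately show False by linarith
qed

lemma sqrt_step:
  fixes D E a :: real
  assumes "D \<ge> 0" "E \<ge> 0" "a \<ge> 0" "E\<^sup>2 \<le> D\<^sup>2 + a*E"
  shows "E \<le> a + D"
proof (rule ccontr)
  assume "\<not> E \<le> a + D"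
  hence h: "E - a > D" by simp
  hence "E*(E-a) > E*D" using assms by (simp add: mult_strict_left_mono)
  moreover have "E*D \<ge> D*D" using h assms by (simp add: mult_right_mono)
  ultimately show False using assms(4) by (simp add: power2_eq_square algebra_simps)
qed

lemma strong_subgrad:
  fixes r :: "'a::real_inner \<Rightarrow> ereal" and F :: "'a \<Rightarrow> real"
  assumes rc: "ext_convex r"
    and Fs: "\<And>t. 0 \<le> t \<Longrightarrow> t \<le> 1 \<Longrightarrow> F ((1-t) *\<^sub>R p + t *\<^sub>R y) \<le> (1-t)*F p + t*F y - c*t*(1-t)*(norm (y-p))\<^sup>2"
    and c: "c \<ge> 0"
    and v: "v \<in> subdiff (\<lambda>z. r z + ereal (F z)) p"
    and ry: "r y = ereal ry"
  obtains rp where "r p = ereal rp" "rp + F p + v \<bullet> (y-p) + c*(norm (y-p))\<^sup>2 \<le> ry + F y"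
proof -
  from v have fin: "\<bar>r p + ereal (F p)\<bar> \<noteq> \<infinity>"
    and sg: "\<And>z. r z + ereal (F z) \<ge> r p + ereal (F p) + ereal (v \<bullet> (z - p))"
    by (auto simp: subdiff_def)
  obtain rp where rp: "r p = ereal rp" using fin by (cases "r p") auto
  have key: "c*(1-t)*(norm (y-p))\<^sup>2 \<le> ry + F y - rp - F p - v \<bullet> (y-p)" if t: "0 < t" "t < 1" for t
  proof -
    define z where "z = (1-t) *\<^sub>R p + t *\<^sub>R y"
    have zp: "z - p = t *\<^sub>R (y - p)" by (simp add: z_def algebra_simps)
    have rz: "r z \<le> ereal ((1-t)*rp + t*ry)"
      using rc t unfolding ext_convex_def z_def
      by (metis (no_types, lifting) less_eq_real_def rp ry times_ereal.simps(1) plus_ereal.simps(1))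
    have "ereal (rp + F p + t*(v \<bullet> (y-p))) \<le> r z + ereal (F z)"
      using sg[of z] rp zp by simp
    also have "\<dots> \<le> ereal ((1-t)*rp + t*ry) + ereal (F z)" using rz by (rule add_right_mono)
    finally have "rp + F p + t*(v \<bullet> (y-p)) \<le> (1-t)*rp + t*ry + F z" by simp
    moreover have "F z \<le> (1-t)*F p + t*F y - c*t*(1-t)*(norm (y-p))\<^sup>2"
      using Fs t unfolding z_def by simp
    ultimately have "t * (c*(1-t)*(norm (y-p))\<^sup>2) \<le> t * (ry + F y - rp - F p - v \<bullet> (y-p))"
      by (simp add: algebra_simps)
    thus ?thesis using t by simp
  qed
  have "c*(norm (y-p))\<^sup>2 \<le> ry + F y - rp - F p - v \<bullet> (y-p)"
    by (rule limit_trick[OF c _ key]) auto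
  thus ?thesis using that rp by simp
qed

theorem lemma5p3:
  fixes f :: "real^'n \<Rightarrow> real" and gradf :: "real^'n \<Rightarrow> real^'n"
    and r :: "real^'n \<Rightarrow> ereal"
    and Aeq :: "real^'n^'e" and beq :: "real^'e" and Ain :: "real^'n^'i" and bin :: "real^'i"
    and Lf \<mu> :: real
    and xs :: "real^'n" and lEs :: "real^'e" and lIs :: "real^'i"
    and x :: "nat \<Rightarrow> real^'n" and lE :: "nat \<Rightarrow> real^'e" and lI :: "nat \<Rightarrow> real^'i"
    and \<beta> \<rho> \<epsilon> :: "nat \<Rightarrow> real" and \<beta>0 \<rho>0 \<sigma> :: real
  assumes f_conv: "convex_on UNIV f"
    and f_grad: "\<And>z. (f has_derivative (\<lambda>h. gradf z \<bullet> h)) (at z)"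
    and f_lip: "\<And>y z. norm (gradf y - gradf z) \<le> Lf * norm (y - z)"
    and mu_nonneg: "\<mu> \<ge> 0"
    and f_strong: "strongly_convex_on_univ \<mu> f"
    and r_proper: "proper_fun r" and r_closed: "closed_fun r" and r_conv: "ext_convex r"
    and KKT_stat: "\<exists>g\<in>subdiff (Gfun f r) xs. g + transpose Aeq *v lEs + transpose Ain *v lIs = 0"
    and KKT_eq: "Aeq *v xs = beq"
    and KKT_ineq: "\<And>i. (Ain *v xs) $ i \<le> bin $ i"
    and KKT_mult: "\<And>i. lIs $ i \<ge> 0"
    and KKT_compl: "lIs \<bullet> (Ain *v xs - bin) = 0"
    and x0_dom: "Gfun f r (x 0) \<noteq> \<infinity>"
    and eps_nonneg: "\<And>k. \<epsilon> k \<ge> 0"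
    and beta0_pos: "\<beta>0 > 0" and rho0_pos: "\<rho>0 > 0" and sigma_gt: "\<sigma> > 1"
    and beta_def: "\<And>k. \<beta> k = \<beta>0 * \<sigma> ^ k"
    and rho_def: "\<And>k. \<rho> k = \<rho>0 / \<sigma> ^ k"
    and x_step: "\<And>k. dist0 (subdiff (\<lambda>z. aug_lag f r Aeq beq Ain bin (\<beta> k) z (lE k) (lI k)
                         + ereal (\<rho> k / 2 * (norm (z - x k))\<^sup>2)) (x (Suc k))) \<le> ereal (\<epsilon> k)"
    and lE_step: "\<And>k. lE (Suc k) = lE k + \<beta> k *\<^sub>R (Aeq *v x (Suc k) - beq)"
    and lI_step: "\<And>k. lI (Suc k) = pos_part (lI k + \<beta> k *\<^sub>R (Ain *v x (Suc k) - bin))"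
  shows "sqrt (\<beta>0 * \<rho>0 * (norm (x (Suc k) - xs))\<^sup>2
               + (norm (lE (Suc k) - lEs))\<^sup>2 + (norm (lI (Suc k) - lIs))\<^sup>2)
         \<le> (\<Sum>i\<le>k. 2 * \<beta> i * \<epsilon> i / sqrt (\<beta>0 * \<rho>0))
           + sqrt (\<beta>0 * \<rho>0 * (norm (x 0 - xs))\<^sup>2
               + (norm (lE 0 - lEs))\<^sup>2 + (norm (lI 0 - lIs))\<^sup>2)"
proof -
  define c where "c = \<beta>0 * \<rho>0"
  have cpos: "c > 0" using beta0_pos rho0_pos by (simp add: c_def)
  have bpos: "\<And>k. \<beta> k > 0" using beta0_pos sigma_gt by (simp add: beta_def)
  have ppos: "\<And>k. \<rho> k > 0" using rho0_pos sigma_gt by (simp add: rho_def)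
  have bp: "\<And>k. \<beta> k * \<rho> k = c" using sigma_gt by (simp add: beta_def rho_def c_def)
  obtain g where g: "g \<in> subdiff (Gfun f r) xs"
    and g0: "g + transpose Aeq *v lEs + transpose Ain *v lIs = 0" using KKT_stat by blast
  from g have gfin: "\<bar>Gfun f r xs\<bar> \<noteq> \<infinity>"
    and gsg: "\<And>z. Gfun f r z \<ge> Gfun f r xs + ereal (g \<bullet> (z - xs))" by (auto simp: subdiff_def)
  obtain rs where rs: "r xs = ereal rs" using gfin by (cases "r xs") (auto simp: Gfun_def)
  have geq: "g = - (transpose Aeq *v lEs + transpose Ain *v lIs)" using g0
    by (metis add.assoc eq_neg_iff_add_eq_0)
  have step: "c*(norm (x (Suc k) - xs))\<^sup>2 + (norm (lE (Suc k) - lEs))\<^sup>2 + (norm (lI (Suc k) - lIs))\<^sup>2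
      \<le> c*(norm (x k - xs))\<^sup>2 + (norm (lE k - lEs))\<^sup>2 + (norm (lI k - lIs))\<^sup>2
         + 2*\<beta> k*\<epsilon> k*norm (x (Suc k) - xs)" for k
  proof -
    define xp where "xp = x (Suc k)"
    define b where "b = \<beta> k"
    define p where "p = \<rho> k"
    define l where "l = lE k"
    define m where "m = lI k"
    have b: "b > 0" and p: "p > 0" and bpc: "b * p = c" using bpos ppos bp by (auto simp: b_def p_def)
    define h1 where "h1 z = l \<bullet> (Aeq *v z - beq)" for z
    define h2 where "h2 z = (norm (Aeq *v z - beq))\<^sup>2" for z
    define h3 where "h3 z = (norm (pos_part (b *\<^sub>R (Ain *v z - bin) + m)))\<^sup>2" for z
    define q where "q z = (norm (z - x k))\<^sup>2" for z
    define h where "h z = h1 z + b/2 * h2 z + 1/(2*b) * (h3 z - (norm m)\<^sup>2)" for z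
    define F where "F z = f z + h z + p/2 * q z" for z
    have Psi: "(\<lambda>z. aug_lag f r Aeq beq Ain bin (\<beta> k) z (lE k) (lI k)
                         + ereal (\<rho> k / 2 * (norm (z - x k))\<^sup>2)) = (\<lambda>z. r z + ereal (F z))"
    proof
      fix z show "aug_lag f r Aeq beq Ain bin (\<beta> k) z (lE k) (lI k) + ereal (\<rho> k / 2 * (norm (z - x k))\<^sup>2)
          = r z + ereal (F z)"
        unfolding aug_lag_def Gfun_def F_def h_def h1_def h2_def h3_def q_def b_def p_def l_def m_def
        by (cases "r z") (auto simp: algebra_simps)
    qed
    have Fs: "F ((1-t) *\<^sub>R u + t *\<^sub>R w) \<le> (1-t)*F u + t*F w - p/2*t*(1-t)*(norm (w-u))\<^sup>2"
      if t: "0 \<le> t" "t \<le> 1" for t u w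
    proof -
      let ?z = "(1-t) *\<^sub>R u + t *\<^sub>R w"
      have fz: "f ?z \<le> (1-t)*f u + t*f w" using convex_onD[OF f_conv t] by simp
      have Az: "Aeq *v ?z - beq = (1-t) *\<^sub>R (Aeq *v u - beq) + t *\<^sub>R (Aeq *v w - beq)"
        by (simp add: matrix_vector_right_distrib matrix_vector_mult_scaleR algebra_simps)
      have h1z: "h1 ?z = (1-t)*h1 u + t*h1 w" unfolding h1_def Az by (simp add: inner_add_right)
      have h2z: "h2 ?z \<le> (1-t)*h2 u + t*h2 w" unfolding h2_def Az norm_sq_comb using t by simp
      have Iz: "b *\<^sub>R (Ain *v ?z - bin) + m = (1-t) *\<^sub>R (b *\<^sub>R (Ain *v u - bin) + m) + t *\<^sub>R (b *\<^sub>R (Ain *v w - bin) + m)"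
        by (simp add: matrix_vector_right_distrib matrix_vector_mult_scaleR algebra_simps)
      have h3z: "h3 ?z \<le> (1-t)*h3 u + t*h3 w" unfolding h3_def Iz by (rule pos_part_conv[OF t])
      have qz: "q ?z = (1-t)*q u + t*q w - t*(1-t)*(norm (w-u))\<^sup>2"
      proof -
        have "?z - x k = (1-t) *\<^sub>R (u - x k) + t *\<^sub>R (w - x k)" by (simp add: algebra_simps)
        moreover have "norm ((u - x k) - (w - x k)) = norm (w - u)" by (simp add: norm_minus_commute)
        ultimately show ?thesis unfolding q_def by (simp add: norm_sq_comb)
      qed
      have A2: "b/2 * h2 ?z \<le> b/2 * ((1-t)*h2 u + t*h2 w)" using h2z b by (simp add: mult_left_mono)
      have A3: "1/(2*b) * (h3 ?z - (norm m)\<^sup>2) \<le> 1/(2*b) * ((1-t)*h3 u + t*h3 w - (norm m)\<^sup>2)"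
        using h3z b by (intro mult_left_mono) auto
      have E: "(1-t)*F u + t*F w - p/2*t*(1-t)*(norm (w-u))\<^sup>2
         = ((1-t)*f u + t*f w) + ((1-t)*h1 u + t*h1 w) + b/2 * ((1-t)*h2 u + t*h2 w)
           + 1/(2*b) * ((1-t)*h3 u + t*h3 w - (norm m)\<^sup>2) + p/2 * ((1-t)*q u + t*q w - t*(1-t)*(norm (w-u))\<^sup>2)"
        unfolding F_def h_def using b by (simp add: field_simps)
      show ?thesis unfolding E unfolding F_def h_def qz h1z using fz A2 A3 by linarith
    qed
    have main: "c*(norm (xp - xs))\<^sup>2 + (norm (lE (Suc k) - lEs))\<^sup>2 + (norm (lI (Suc k) - lIs))\<^sup>2
      \<le> c*(norm (x k - xs))\<^sup>2 + (norm (lE k - lEs))\<^sup>2 + (norm (lI k - lIs))\<^sup>2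
         + d * (2*b*norm (xp - xs)) + 2*b*\<epsilon> k*norm (xp - xs)" if d: "d > 0" for d
    proof -
      have "dist0 (subdiff (\<lambda>z. r z + ereal (F z)) xp) < ereal (\<epsilon> k + d)"
      proof -
        have "ereal (\<epsilon> k) < ereal (\<epsilon> k + d)" using d by simp
        thus ?thesis using x_step[of k] unfolding Psi xp_def by (rule order.strict_trans1[rotated])
      qed
      then obtain v where v: "v \<in> subdiff (\<lambda>z. r z + ereal (F z)) xp" and nv: "norm v < \<epsilon> k + d"
        unfolding dist0_def INF_less_iff by auto
      obtain rp where rp: "r xp = ereal rp"
        and S: "rp + F xp + v \<bullet> (xs - xp) + p/2*(norm (xs - xp))\<^sup>2 \<le> rs + F xs"
        using strong_subgrad[of r F xp xs "p/2" v rs] r_conv Fs v rs p by auto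
      define eE where "eE = Aeq *v xp - beq"
      define eI where "eI = Ain *v xp - bin"
      have lEs': "lE (Suc k) = l + b *\<^sub>R eE" using lE_step by (simp add: l_def b_def eE_def xp_def)
      have lIs': "lI (Suc k) = pos_part (m + b *\<^sub>R eI)" using lI_step by (simp add: m_def b_def eI_def xp_def)
      have h1s: "h1 xs = 0" and h2s: "h2 xs = 0" using KKT_eq by (auto simp: h1_def h2_def)
      have h3s: "h3 xs \<le> (norm m)\<^sup>2" unfolding h3_def
        by (rule pos_part_le) (use KKT_ineq b in auto)
      have II: "h xs \<le> 0" unfolding h_def using h1s h2s h3s b
        by (simp add: divide_nonpos_pos)
      have nE: "(norm (lE (Suc k)))\<^sup>2 = (norm l)\<^sup>2 + 2*b*(l \<bullet> eE) + b\<^sup>2 * (norm eE)\<^sup>2"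
        unfolding lEs' power2_norm_eq_inner by (simp add: inner_add_left inner_add_right inner_commute algebra_simps power2_eq_square)
      have III: "h xp = 1/(2*b)*((norm (lE (Suc k)))\<^sup>2 - (norm l)\<^sup>2) + 1/(2*b)*((norm (lI (Suc k)))\<^sup>2 - (norm m)\<^sup>2)"
      proof -
        have "h3 xp = (norm (lI (Suc k)))\<^sup>2" unfolding h3_def lIs' eI_def by (simp add: add.commute)
        moreover have "h1 xp + b/2 * h2 xp = 1/(2*b)*((norm (lE (Suc k)))\<^sup>2 - (norm l)\<^sup>2)"
          unfolding nE h1_def h2_def eE_def[symmetric] using b by (simp add: field_simps power2_eq_square)
        ultimately show ?thesis unfolding h_def by (simp add: algebra_simps)
      qed
      have IV: "f xs + rs - lEs \<bullet> eE - lIs \<bullet> eI \<le> f xp + rp"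
      proof -
        have "ereal (f xs + rs + g \<bullet> (xp - xs)) \<le> ereal (f xp + rp)"
          using gsg[of xp] rs rp by (simp add: Gfun_def)
        hence "f xs + rs + g \<bullet> (xp - xs) \<le> f xp + rp" by simp
        moreover have "g \<bullet> (xp - xs) = - (lEs \<bullet> eE) - lIs \<bullet> eI"
        proof -
          have "g \<bullet> (xp - xs) = - (lEs \<bullet> (Aeq *v (xp - xs))) - lIs \<bullet> (Ain *v (xp - xs))"
            unfolding geq transpose_matrix_vector by (simp only: inner_diff_left inner_minus_left dot_lmul_matrix minus_add_distrib inner_add_left)
          moreover have "Aeq *v (xp - xs) = eE" using KKT_eq by (simp add: eE_def matrix_vector_mult_diff_distrib)
          moreover have "Ain *v (xp - xs) = eI - (Ain *v xs - bin)" by (simp add: eI_def matrix_vector_mult_diff_distrib)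
          ultimately show ?thesis using KKT_compl by (simp add: inner_diff_right)
        qed
        ultimately show ?thesis by linarith
      qed
      have VE: "lEs \<bullet> (lE (Suc k) - l) = b * (lEs \<bullet> eE)" unfolding lEs' by simp
      have VI: "lIs \<bullet> (lI (Suc k) - m) \<ge> b * (lIs \<bullet> eI)"
      proof -
        have "b * (lIs \<bullet> eI) = lIs \<bullet> ((m + b *\<^sub>R eI) - m)" by simp
        also have "\<dots> \<le> lIs \<bullet> (lI (Suc k) - m)" unfolding lIs' inner_vec_def
        proof (rule sum_mono)
          fix i
          have "(m + b *\<^sub>R eI) $ i \<le> pos_part (m + b *\<^sub>R eI) $ i" by (rule pos_part_ge)
          hence "b * eI $ i \<le> pos_part (m + b *\<^sub>R eI) $ i - m $ i" by simp
          thus "lIs $ i \<bullet> ((m + b *\<^sub>R eI) - m) $ i \<le> lIs $ i \<bullet> (pos_part (m + b *\<^sub>R eI) - m) $ i"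
            using KKT_mult[of i] by (simp add: mult_left_mono)
        qed
        finally show ?thesis .
      qed
      have F1: "1/(2*b)*((norm (lE (Suc k) - lEs))\<^sup>2 - (norm (lE k - lEs))\<^sup>2)
          = 1/(2*b)*((norm (lE (Suc k)))\<^sup>2 - (norm l)\<^sup>2) - lEs \<bullet> eE"
      proof -
        have "(norm (lE (Suc k) - lEs))\<^sup>2 - (norm (lE k - lEs))\<^sup>2
            = ((norm (lE (Suc k)))\<^sup>2 - (norm l)\<^sup>2) - 2 * (lEs \<bullet> (lE (Suc k) - l))"
          by (simp add: l_def power2_norm_eq_inner inner_diff_left inner_diff_right inner_commute)
        thus ?thesis unfolding VE using b by (simp add: field_simps)
      qed
      have F2: "1/(2*b)*((norm (lI (Suc k) - lIs))\<^sup>2 - (norm (lI k - lIs))\<^sup>2)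
          \<le> 1/(2*b)*((norm (lI (Suc k)))\<^sup>2 - (norm m)\<^sup>2) - lIs \<bullet> eI"
      proof -
        have e: "(norm (lI (Suc k) - lIs))\<^sup>2 - (norm (lI k - lIs))\<^sup>2
            = ((norm (lI (Suc k)))\<^sup>2 - (norm m)\<^sup>2) - 2 * (lIs \<bullet> (lI (Suc k) - m))"
          by (simp add: m_def power2_norm_eq_inner inner_diff_left inner_diff_right inner_commute)
        have "1/(2*b) * (2 * (lIs \<bullet> (lI (Suc k) - m))) \<ge> 1/(2*b) * (2 * (b * (lIs \<bullet> eI)))"
          using VI b by (intro mult_left_mono) auto
        hence "1/(2*b) * (2 * (lIs \<bullet> (lI (Suc k) - m))) \<ge> lIs \<bullet> eI" using b by simp
        thus ?thesis unfolding e by (simp add: right_diff_distrib)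
      qed
      have VB: "- (v \<bullet> (xs - xp)) \<le> (\<epsilon> k + d) * norm (xp - xs)"
      proof -
        have "- (v \<bullet> (xs - xp)) \<le> norm v * norm (xs - xp)"
          by (metis Cauchy_Schwarz_ineq2 abs_le_D2 inner_minus_left mult.commute norm_minus_cancel abs_minus_cancel) 
        also have "\<dots> \<le> (\<epsilon> k + d) * norm (xp - xs)" using nv
          by (simp add: norm_minus_commute mult_right_mono)
        finally show ?thesis .
      qed
      have nn: "norm (xs - xp) = norm (xp - xs)" "norm (xs - x k) = norm (x k - xs)"
        by (simp_all add: norm_minus_commute)
      have qp: "q xp \<ge> 0" by (simp add: q_def)
      have pq: "p/2 * q xp \<ge> 0" using p qp by simp
      have star: "p/2*(norm (xp - xs))\<^sup>2 + (1/(2*b)*((norm (lE (Suc k) - lEs))\<^sup>2 - (norm (lE k - lEs))\<^sup>2)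
           + 1/(2*b)*((norm (lI (Suc k) - lIs))\<^sup>2 - (norm (lI k - lIs))\<^sup>2))
         \<le> p/2*(norm (x k - xs))\<^sup>2 + (\<epsilon> k + d) * norm (xp - xs)"
        using S[unfolded F_def q_def nn] II III IV F1 F2 VB[unfolded nn] pq[unfolded q_def] by linarith
      then have M: "2*b*(p/2*(norm (xp - xs))\<^sup>2 + (1/(2*b)*((norm (lE (Suc k) - lEs))\<^sup>2 - (norm (lE k - lEs))\<^sup>2)
           + 1/(2*b)*((norm (lI (Suc k) - lIs))\<^sup>2 - (norm (lI k - lIs))\<^sup>2)))
         \<le> 2*b*(p/2*(norm (x k - xs))\<^sup>2 + (\<epsilon> k + d) * norm (xp - xs))"
        using b by (intro mult_left_mono) auto
      have L: "2*b*(p/2*(norm (xp - xs))\<^sup>2 + (1/(2*b)*((norm (lE (Suc k) - lEs))\<^sup>2 - (norm (lE k - lEs))\<^sup>2)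
           + 1/(2*b)*((norm (lI (Suc k) - lIs))\<^sup>2 - (norm (lI k - lIs))\<^sup>2)))
          = c*(norm (xp - xs))\<^sup>2 + ((norm (lE (Suc k) - lEs))\<^sup>2 - (norm (lE k - lEs))\<^sup>2)
           + ((norm (lI (Suc k) - lIs))\<^sup>2 - (norm (lI k - lIs))\<^sup>2)"
      proof -
        have gen: "\<And>u A X Y::real. 2*b*(p/2*A + (u*X + u*Y)) = (b*p)*A + (2*b*u)*X + (2*b*u)*Y"
          by (simp add: algebra_simps)
        have u: "2*b*(1/(2*b)) = 1" using b by simp
        show ?thesis unfolding gen u bpc by simp
      qed
      have R: "2*b*(p/2*(norm (x k - xs))\<^sup>2 + (\<epsilon> k + d) * norm (xp - xs))
          = c*(norm (x k - xs))\<^sup>2 + d * (2*b*norm (xp - xs)) + 2*b*\<epsilon> k*norm (xp - xs)"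
        unfolding bpc[symmetric] by (simp add: algebra_simps)
      show ?thesis using M unfolding L R by linarith
    qed
    have "c*(norm (xp - xs))\<^sup>2 + (norm (lE (Suc k) - lEs))\<^sup>2 + (norm (lI (Suc k) - lIs))\<^sup>2
      \<le> c*(norm (x k - xs))\<^sup>2 + (norm (lE k - lEs))\<^sup>2 + (norm (lI k - lIs))\<^sup>2
         + 2*b*\<epsilon> k*norm (xp - xs)"
      by (rule dist_trick[of "2*b*norm (xp - xs)"]) (use b main in \<open>auto simp: algebra_simps\<close>)
    thus ?thesis by (simp add: xp_def b_def)
  qed
  define D where "D k = sqrt (c*(norm (x k - xs))\<^sup>2 + (norm (lE k - lEs))\<^sup>2 + (norm (lI k - lIs))\<^sup>2)" for k
  have D0: "D k \<ge> 0" for k using cpos by (simp add: D_def)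
  have stepD: "D (Suc k) \<le> 2 * \<beta> k * \<epsilon> k / sqrt c + D k" for k
  proof -
    let ?N = "norm (x (Suc k) - xs)"
    let ?a = "2 * \<beta> k * \<epsilon> k / sqrt c"
    have sqD: "(D j)\<^sup>2 = c*(norm (x j - xs))\<^sup>2 + (norm (lE j - lEs))\<^sup>2 + (norm (lI j - lIs))\<^sup>2" for j
      unfolding D_def by (rule real_sqrt_pow2) (use cpos in \<open>auto intro!: add_nonneg_nonneg\<close>)
    have sc: "sqrt c > 0" using cpos by simp
    have "(sqrt c * ?N)\<^sup>2 = c * ?N\<^sup>2" using cpos by (simp add: power_mult_distrib)
    also have "\<dots> \<le> (D (Suc k))\<^sup>2" unfolding sqD by simp
    finally have NS: "sqrt c * ?N \<le> D (Suc k)" by (rule power2_le_imp_le[OF _ D0])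
    have a0: "?a \<ge> 0" using bpos[of k] eps_nonneg[of k] sc by simp
    have "2*\<beta> k*\<epsilon> k*?N = ?a * (sqrt c * ?N)" using sc by simp
    also have "\<dots> \<le> ?a * D (Suc k)" using NS a0 by (rule mult_left_mono)
    finally have T: "2*\<beta> k*\<epsilon> k*?N \<le> ?a * D (Suc k)" .
    have "(D (Suc k))\<^sup>2 \<le> (D k)\<^sup>2 + ?a * D (Suc k)"
      unfolding sqD using step[of k] T by linarith
    thus ?thesis by (rule sqrt_step[OF D0 D0 a0])
  qed
  have "D (Suc k) \<le> (\<Sum>i\<le>k. 2 * \<beta> i * \<epsilon> i / sqrt c) + D 0"
  proof (induction k)
    case 0 then show ?case using stepD[of 0] by simp
  next
    case (Suc k) then show ?case using stepD[of "Suc k"] by (simp only: sum.atMost_Suc)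
  qed
  thus ?thesis by (simp only: D_def c_def)
qed

end
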